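(* Let $F\subsetneq K$ be fields of characteristic $0$, with $F$ a proper nonempty subfield of $K$. Let $p(x)=\sum_{k=0}^{n}a_k x^k\in K[x]$ be non-constant with $a_n\neq 0$, and let $q(x)=\sum_{j=0}^{m}b_j x^j\in K[x]\setminus F[x]$ with $b_m\neq 0$. Suppose $a_n,b_m,b_0\in F$. Then $p\circ q\notin F[x]$ and $D_F(p\circ q)=D_F(q)$.
   Context: For sets $F\subset K$ and $p(x)=\sum_{k=0}^{n}a_kx^k\in K[x]$ with $a_n\neq 0$, the $F$ deficit $D_F(p)$ is defined as follows: if $p\in K[x]\setminus F[x]$, then $D_F(p)=n-\max\{0\le k\le n: a_k\notin F\}$; if $p\in F[x]$, then $D_F(p)=n$. Here $F[x]$ denotes the set of polynomials with all coefficients in $F$. *)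

theory Defs
  imports "HOL-Computational_Algebra.Polynomial"
begin

definition is_subfield :: "'a::field set \<Rightarrow> bool" where
  "is_subfield F \<longleftrightarrow> 0 \<in> F \<and> 1 \<in> F \<and>
     (\<forall>x\<in>F. \<forall>y\<in>F. x + y \<in> F \<and> x * y \<in> F) \<and>
     (\<forall>x\<in>F. - x \<in> F) \<and> (\<forall>x\<in>F. x \<noteq> 0 \<longrightarrow> inverse x \<in> F)"

definition poly_over :: "'a::zero set \<Rightarrow> 'a poly set" where
  "poly_over F = {p. \<forall>i. coeff p i \<in> F}"

definition deficit :: "'a::zero set \<Rightarrow> 'a poly \<Rightarrow> nat" where
  "deficit F p = (if p \<in> poly_over F then degree p
     else degree p - Max {k. k \<le> degree p \<and> coeff p k \<notin> F})"

end

theory Submission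
  imports Defs
begin

lemma sf_basic:
  assumes "is_subfield F"
  shows "0 \<in> F" "1 \<in> F" "x \<in> F \<Longrightarrow> y \<in> F \<Longrightarrow> x + y \<in> F"
    "x \<in> F \<Longrightarrow> y \<in> F \<Longrightarrow> x * y \<in> F" "x \<in> F \<Longrightarrow> - x \<in> F"
    "x \<in> F \<Longrightarrow> x \<noteq> 0 \<Longrightarrow> inverse x \<in> F"
  using assms unfolding is_subfield_def by auto

lemma sf_of_nat:
  assumes "is_subfield F" shows "of_nat n \<in> F"
  by (induction n) (auto intro: sf_basic[OF assms])

lemma sf_notin_add:
  assumes "is_subfield F" "a \<in> F" "b \<notin> F" shows "a + b \<notin> F"
proof
  assume "a + b \<in> F"
  then have "(a + b) + - a \<in> F" using sf_basic[OF assms(1)] assms(2) by blast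
  then show False using assms(3) by simp
qed

lemma sf_notin_mult:
  fixes c :: "'a::field"
  assumes "is_subfield F" "c \<in> F" "c \<noteq> 0" "b \<notin> F" shows "c * b \<notin> F"
proof
  assume "c * b \<in> F"
  then have "inverse c * (c * b) \<in> F" using sf_basic[OF assms(1)] assms(2,3) by blast
  then show False using assms(3,4) by (simp add: field_simps)
qed

lemma poly_over_mult:
  assumes "is_subfield F" "P \<in> poly_over F" "Q \<in> poly_over F"
  shows "P * Q \<in> poly_over F"
  using assms unfolding poly_over_def
  by (auto intro!: coeff_mult_semiring_closed sf_basic[OF assms(1)])

lemma poly_over_power:
  assumes "is_subfield F" "P \<in> poly_over F"
  shows "P ^ n \<in> poly_over F"
proof (induction n)
  case 0
  then show ?case using sf_basic[OF assms(1)] by (auto simp: poly_over_def coeff_1)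
next
  case (Suc n)
  then show ?case using poly_over_mult[OF assms(1) assms(2)] by simp
qed

lemma degree_of_nat_mult: "degree (of_nat c * (P :: 'a::comm_ring_1 poly)) \<le> degree P"
  by (simp add: of_nat_poly degree_smult_le)

lemma coeff_of_nat_mult: "coeff (of_nat c * (P :: 'a::comm_ring_1 poly)) i = of_nat c * coeff P i"
  by (simp add: of_nat_poly)

lemma binom_expand:
  fixes A B :: "'a::comm_ring_1 poly"
  assumes "degree A = m" "degree B = k" "0 < k" "k < m"
  shows "\<exists>E. (A+B)^(Suc j) = A^(Suc j) + of_nat (Suc j) * (A^j * B) + E \<and> degree E < j*m + k"
proof (induction j)
  case 0
  then show ?case using assms by (intro exI[of _ 0]) auto
next
  case (Suc j)
  then obtain E where E: "(A+B)^(Suc j) = A^(Suc j) + of_nat (Suc j) * (A^j * B) + E"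
    "degree E < j*m + k" by blast
  define E' where "E' = A*E + of_nat (Suc j) * (A^j*B*B) + B*E"
  have "(A+B)^(Suc (Suc j)) = (A+B) * (A^(Suc j) + of_nat (Suc j) * (A^j * B) + E)"
    using E(1) by simp
  also have "\<dots> = A^(Suc (Suc j)) + of_nat (Suc (Suc j)) * (A^(Suc j) * B) + E'"
    unfolding E'_def by (simp add: algebra_simps)
  finally have eq: "(A+B)^(Suc (Suc j)) = A^(Suc (Suc j)) + of_nat (Suc (Suc j)) * (A^(Suc j) * B) + E'" .
  have dAj: "degree (A^j) \<le> j*m" using degree_power_le[of A j] assms(1) by (simp add: mult.commute)
  have d1: "degree (A*E) < Suc j * m + k"
    using degree_mult_le[of A E] E(2) assms(1) by simp
  have "degree (A^j*B*B) \<le> j*m + k + k"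
    using degree_mult_le[of "A^j*B" B] degree_mult_le[of "A^j" B] dAj assms(2) by linarith
  then have d2: "degree (of_nat (Suc j) * (A^j*B*B)) < Suc j * m + k"
    using degree_of_nat_mult[of "Suc j" "A^j*B*B"] assms(4) by simp
  have d3: "degree (B*E) < Suc j * m + k"
    using degree_mult_le[of B E] E(2) assms(2,4) by simp
  have "degree E' < Suc j * m + k"
    unfolding E'_def using d1 d2 d3 by (intro degree_add_less) auto
  then show ?case using eq by blast
qed

lemma pcompose_monom: "pcompose (monom c n) q = smult c (q ^ n)"
  by (induction n) (auto simp: monom_Suc pcompose_pCons monom_0)


theorem corollary3:
  fixes F :: "'a::field_char_0 set" and p q :: "'a poly"
  assumes "is_subfield F" and "F \<noteq> UNIV"
    and "degree p > 0"
    and "q \<notin> poly_over F"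
    and "lead_coeff p \<in> F" and "lead_coeff q \<in> F" and "coeff q 0 \<in> F"
  shows "pcompose p q \<notin> poly_over F \<and> deficit F (pcompose p q) = deficit F q"
proof -
  note sf = sf_basic[OF assms(1)]
  define n where "n = degree p"
  define m where "m = degree q"
  define a where "a = lead_coeff p"
  define S where "S = {j. j \<le> m \<and> coeff q j \<notin> F}"
  define k where "k = Max S"
  obtain i where i: "coeff q i \<notin> F" using assms(4) unfolding poly_over_def by auto
  have "i \<le> m"
  proof (rule ccontr)
    assume "\<not> i \<le> m" then have "coeff q i = 0" unfolding m_def by (simp add: coeff_eq_0)
    then show False using i sf by simp
  qed
  then have iS: "i \<in> S" using i unfolding S_def by auto
  have finS: "finite S" unfolding S_def by auto
  have kS: "k \<in> S" unfolding k_def using finS iS Max_in by blast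
  have kmax: "\<And>j. j \<in> S \<Longrightarrow> j \<le> k" unfolding k_def using finS by auto
  have bk: "coeff q k \<notin> F" and "k \<le> m" using kS unfolding S_def by auto
  have "k \<noteq> 0" using bk assms(7) by (metis)
  moreover have "k \<noteq> m" using bk assms(6) unfolding m_def by auto
  ultimately have k0: "0 < k" and km: "k < m" using \<open>k \<le> m\<close> by auto
  have hi: "coeff q j \<in> F" if "j > k" for j
  proof (cases "j \<le> m")
    case True
    then show ?thesis using kmax[of j] that unfolding S_def by force
  next
    case False
    then have "coeff q j = 0" unfolding m_def by (simp add: coeff_eq_0)
    then show ?thesis using sf by simp
  qed
  have bk0: "coeff q k \<noteq> 0" using bk sf by auto
  have bm0: "coeff q m \<noteq> 0" using km unfolding m_def by (metis leading_coeff_0_iff not_less0 degree_0)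
  define B where "B = poly_cutoff (Suc k) q"
  define A where "A = q - B"
  have cB: "coeff B j = (if j \<le> k then coeff q j else 0)" for j
    unfolding B_def by (simp add: coeff_poly_cutoff)
  have cA: "coeff A j = (if j \<le> k then 0 else coeff q j)" for j
    unfolding A_def by (simp add: cB)
  have qAB: "q = A + B" unfolding A_def by simp
  have dB: "degree B = k"
  proof (rule antisym)
    show "degree B \<le> k" by (rule degree_le) (simp add: cB)
    show "k \<le> degree B" by (rule le_degree) (simp add: cB bk0)
  qed
  have dA: "degree A = m"
  proof (rule antisym)
    show "degree A \<le> m" by (rule degree_le) (simp add: cA m_def coeff_eq_0)
    show "m \<le> degree A" by (rule le_degree) (use km bm0 in \<open>simp add: cA\<close>)
  qed
  have lcA: "lead_coeff A = coeff q m" using dA km by (simp add: cA)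
  have AF: "A \<in> poly_over F" unfolding poly_over_def using hi sf by (auto simp: cA)
  obtain j where nj: "n = Suc j" using assms(3) unfolding n_def by (cases "degree p") auto
  obtain E where E: "(A+B)^(Suc j) = A^(Suc j) + of_nat (Suc j) * (A^j * B) + E"
    and dE: "degree E < j*m + k"
    using binom_expand[OF dA dB k0 km] by blast
  define p' where "p' = p - monom a n"
  have pp': "p = monom a n + p'" unfolding p'_def by simp
  have dp': "degree p' \<le> j"
  proof (rule degree_le, intro allI impI)
    fix i assume "j < i"
    then have "i = n \<or> i > n" using nj by auto
    then show "coeff p' i = 0"
      unfolding p'_def a_def n_def by (auto simp: coeff_monom coeff_eq_0)
  qed
  have dpc: "degree (pcompose p' q) \<le> j * m"
    using dp' unfolding degree_pcompose m_def by simp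
  define G where "G = smult a E + pcompose p' q"
  have dG: "degree G < j*m + k"
    unfolding G_def using dE dpc k0 degree_smult_le[of a E]
    by (intro degree_add_less) auto
  define C where "C = A^j * B"
  have pq: "pcompose p q = smult a (A^n) + smult a (of_nat n * C) + G"
  proof -
    have "pcompose p q = smult a (q^n) + pcompose p' q"
      by (subst pp') (simp add: pcompose_add pcompose_monom)
    also have "q^n = A^n + of_nat n * C + E" unfolding qAB nj C_def E by simp
    finally show ?thesis unfolding G_def by (simp add: smult_add_right)
  qed
  define T where "T = j*m + k"
  have A0: "A \<noteq> 0" using dA km by auto
  have B0: "B \<noteq> 0" using dB k0 by auto
  have dC: "degree C = T" unfolding C_def T_def
    using A0 B0 by (simp add: degree_mult_eq degree_power_eq dA dB)
  have lAj: "coeff (A^j) (j*m) = coeff q m ^ j"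
    using lead_coeff_power[of A j] A0 using km by (simp add: degree_power_eq dA cA)
  have cCT: "coeff C T = coeff q m ^ j * coeff q k"
    using coeff_mult_degree_sum[of "A^j" B] A0 unfolding C_def T_def
    by (simp add: degree_power_eq dA dB lAj cB)
  have cpq: "coeff (pcompose p q) i = a * coeff (A^n) i + a * (of_nat n * coeff C i) + coeff G i" for i
    unfolding pq by (simp add: coeff_of_nat_mult)
  have AnF: "A^n \<in> poly_over F" using poly_over_power[OF assms(1) AF] .
  have a0: "a \<noteq> 0" unfolding a_def using assms(3) by auto
  have aF: "a \<in> F" unfolding a_def using assms(5) .
  have above: "coeff (pcompose p q) i \<in> F" if "i > T" for i
  proof -
    have "coeff C i = 0" using that dC by (simp add: coeff_eq_0)
    moreover have "coeff G i = 0" using that dG unfolding T_def by (simp add: coeff_eq_0)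
    ultimately show ?thesis using cpq[of i] sf(4)[OF aF] AnF unfolding poly_over_def by simp
  qed
  have atT: "coeff (pcompose p q) T \<notin> F"
  proof -
    have "coeff G T = 0" using dG unfolding T_def by (simp add: coeff_eq_0)
    then have eq: "coeff (pcompose p q) T = a * coeff (A^n) T + (a * of_nat n * coeff q m ^ j) * coeff q k"
      using cpq[of T] cCT by (simp add: algebra_simps)
    have f1: "a * coeff (A^n) T \<in> F" using sf(4)[OF aF] AnF unfolding poly_over_def by simp
    have cmF: "coeff q m \<in> F" using assms(6) unfolding m_def .
    have cmjF: "coeff q m ^ j \<in> F"
      by (induction j) (use sf cmF in auto)
    have f2: "a * of_nat n * coeff q m ^ j \<in> F"
      using sf(4) aF sf_of_nat[OF assms(1), of n] cmjF by blast
    have f3: "a * of_nat n * coeff q m ^ j \<noteq> 0" using a0 bm0 nj of_nat_eq_0_iff[of n, where ?'a='a] by simp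
    show ?thesis unfolding eq
      by (rule sf_notin_add[OF assms(1) f1 sf_notin_mult[OF assms(1) f2 f3 bk]])
  qed
  have npq: "pcompose p q \<notin> poly_over F" using atT unfolding poly_over_def by auto
  have dpq: "degree (pcompose p q) = Suc j * m" by (simp add: degree_pcompose n_def[symmetric] nj m_def)
  have Tle: "T \<le> Suc j * m" unfolding T_def using km by simp
  have Mx: "Max {i. i \<le> degree (pcompose p q) \<and> coeff (pcompose p q) i \<notin> F} = T"
  proof (rule Max_eqI)
    show "finite {i. i \<le> degree (pcompose p q) \<and> coeff (pcompose p q) i \<notin> F}" by simp
    show "T \<in> {i. i \<le> degree (pcompose p q) \<and> coeff (pcompose p q) i \<notin> F}"
      using atT Tle dpq by simp
    fix y assume "y \<in> {i. i \<le> degree (pcompose p q) \<and> coeff (pcompose p q) i \<notin> F}"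
    then show "y \<le> T" using above not_less by blast
  qed
  have "S = {i. i \<le> degree q \<and> coeff q i \<notin> F}" unfolding S_def m_def ..
  then have dq: "deficit F q = m - k" unfolding deficit_def k_def using assms(4) m_def by simp
  have "deficit F (pcompose p q) = Suc j * m - T" unfolding deficit_def using npq Mx dpq by simp
  also have "\<dots> = m - k" unfolding T_def using km by simp
  finally show ?thesis using npq dq by simp
qed

end
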